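(* Let $\kappa\ge 3$ be an integer, $\mathcal{P}_0$ a finite set of primes, and $\omega$ a nonnegative integer-valued function on the primes with $\omega(p)<\kappa$ for $p\in\mathcal{P}_0$, $\omega(p)=\kappa$ for primes $p\notin\mathcal{P}_0$, and $\omega(p)<p$ for all primes $p$. Define $\omega_0(p)=\kappa$ for $p>\kappa$ and $\omega_0(p)=\omega(p)$ for $p\le\kappa$. Then for all $z>0$, \[L(z,\omega)\geq \prod_{\substack{p\in\mathcal{P}_0\\ p>\kappa}}\frac{p-\kappa}{p-\omega(p)}\,L(z,\omega_0).\]
   Context: For a function $h$ on the primes with $0\le h(p)<p$ for all $p$, and $z>0$, define $L(z,h)=\sum_{q\leq z}\mu^2(q)\prod_{p\mid q}\frac{h(p)}{p-h(p)}$, where $q$ runs over positive integers and $\mu$ is the Möbius function. *)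

theory Defs
  imports "HOL-Analysis.Analysis" "HOL-Computational_Algebra.Squarefree"
begin

definition L :: "real \<Rightarrow> (nat \<Rightarrow> nat) \<Rightarrow> real" where
  "L z h = (\<Sum>q \<in> {q. 0 < q \<and> real q \<le> z \<and> squarefree q}.
              \<Prod>p \<in> prime_factors q. real (h p) / (real p - real (h p)))"

end

theory Submission
  imports Defs
begin

definition G :: "(nat \<Rightarrow> nat) \<Rightarrow> nat \<Rightarrow> real" where
  "G h m = (\<Prod>q \<in> prime_factors m. real (h q) / (real q - real (h q)))"

definition Aux :: "(nat \<Rightarrow> nat) \<Rightarrow> nat \<Rightarrow> real \<Rightarrow> real" where
  "Aux h p y = (\<Sum>m \<in> {m. 0 < m \<and> real m \<le> y \<and> squarefree m \<and> \<not> p dvd m}. G h m)"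

lemma fin_aux: "real m \<le> y \<Longrightarrow> m \<le> nat \<lceil>y\<rceil>"
proof -
  assume a: "real m \<le> y"
  have "real m \<le> real_of_int \<lceil>y\<rceil>" using a le_of_int_ceiling[of y] by linarith
  then have "int m \<le> \<lceil>y\<rceil>" by linarith
  then show "m \<le> nat \<lceil>y\<rceil>" by linarith
qed

lemma fin_set: "finite {m::nat. 0 < m \<and> real m \<le> y \<and> P m}"
proof (rule finite_subset[of _ "{..nat \<lceil>y\<rceil>}"])
  show "{m::nat. 0 < m \<and> real m \<le> y \<and> P m} \<subseteq> {..nat \<lceil>y\<rceil>}"
    using fin_aux by blast
qed simp

lemma G_nonneg:
  assumes "\<forall>q. prime q \<longrightarrow> h q < q"
  shows "G h m \<ge> 0"
  unfolding G_def
proof (rule prod_nonneg)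
  fix q assume "q \<in> prime_factors m"
  then have "prime q" by (auto intro: in_prime_factors_imp_prime)
  with assms have "h q < q" by auto
  then show "real (h q) / (real q - real (h q)) \<ge> 0" by simp
qed

lemma G_cong:
  assumes "\<not> p dvd m" "\<forall>q. prime q \<and> q \<noteq> p \<longrightarrow> h q = h' q"
  shows "G h m = G h' m"
  unfolding G_def
proof (rule prod.cong[OF refl])
  fix q assume q: "q \<in> prime_factors m"
  then have "prime q" "q dvd m" by (auto intro: in_prime_factors_imp_prime)
  with assms have "h q = h' q" by auto
  then show "real (h q) / (real q - real (h q)) = real (h' q) / (real q - real (h' q))" by simp
qed

lemma Aux_cong:
  assumes "\<forall>q. prime q \<and> q \<noteq> p \<longrightarrow> h q = h' q"
  shows "Aux h p y = Aux h' p y"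
  unfolding Aux_def using G_cong[OF _ assms] by (intro sum.cong) auto

lemma Aux_mono:
  assumes "\<forall>q. prime q \<longrightarrow> h q < q" "y \<le> y'"
  shows "Aux h p y \<le> Aux h p y'"
  unfolding Aux_def
proof (rule sum_mono2[OF fin_set])
  show "{m. 0 < m \<and> real m \<le> y \<and> squarefree m \<and> \<not> p dvd m}
        \<subseteq> {m. 0 < m \<and> real m \<le> y' \<and> squarefree m \<and> \<not> p dvd m}"
    using assms(2) by auto
  fix b show "0 \<le> G h b" by (rule G_nonneg[OF assms(1)])
qed

lemma G_mult:
  assumes "prime p" "\<not> p dvd m" "m > 0"
  shows "G h (p * m) = real (h p) / (real p - real (h p)) * G h m"
proof -
  have "prime_factors (p * m) = insert p (prime_factors m)"
    using assms by (simp add: prime_factors_product prime_prime_factors)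
  moreover have "p \<notin> prime_factors m" using assms by auto
  ultimately show ?thesis unfolding G_def by simp
qed

lemma L_split:
  assumes p: "prime p"
  shows "L z h = Aux h p z + real (h p) / (real p - real (h p)) * Aux h p (z / p)"
proof -
  define Q where "Q = {q::nat. 0 < q \<and> real q \<le> z \<and> squarefree q}"
  define M where "M = {m::nat. 0 < m \<and> real m \<le> z / p \<and> squarefree m \<and> \<not> p dvd m}"
  have fQ: "finite Q" unfolding Q_def by (rule fin_set)
  have L1: "L z h = (\<Sum>q\<in>Q. G h q)" unfolding L_def G_def Q_def by simp
  have split: "(\<Sum>q\<in>Q. G h q) = (\<Sum>q\<in>{q\<in>Q. \<not> p dvd q}. G h q) + (\<Sum>q\<in>{q\<in>Q. p dvd q}. G h q)"
  proof -
    have "Q = {q\<in>Q. \<not> p dvd q} \<union> {q\<in>Q. p dvd q}" by blast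
    then have "(\<Sum>q\<in>Q. G h q) = (\<Sum>q\<in>{q\<in>Q. \<not> p dvd q} \<union> {q\<in>Q. p dvd q}. G h q)" by simp
    also have "\<dots> = (\<Sum>q\<in>{q\<in>Q. \<not> p dvd q}. G h q) + (\<Sum>q\<in>{q\<in>Q. p dvd q}. G h q)"
      by (rule sum.union_disjoint) (use fQ in auto)
    finally show ?thesis .
  qed
  have first: "{q\<in>Q. \<not> p dvd q} = {m. 0 < m \<and> real m \<le> z \<and> squarefree m \<and> \<not> p dvd m}"
    unfolding Q_def by auto
  have pp: "real p > 0" using p prime_gt_0_nat by auto
  have img: "{q\<in>Q. p dvd q} = (\<lambda>m. p * m) ` M"
  proof
    show "{q\<in>Q. p dvd q} \<subseteq> (\<lambda>m. p * m) ` M"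
    proof
      fix q assume "q \<in> {q\<in>Q. p dvd q}"
      then have q: "0 < q" "real q \<le> z" "squarefree q" "p dvd q" unfolding Q_def by auto
      from q(4) obtain m where m: "q = p * m" by (rule dvdE)
      have "\<not> p dvd m"
      proof
        assume "p dvd m"
        then have "p^2 dvd q" using m by (auto simp: power2_eq_square)
        with q(3) have "is_unit p" unfolding squarefree_def by blast
        with p show False by auto
      qed
      moreover have "squarefree m" using squarefree_multD(2)[of p m] q(3) unfolding m by simp
      moreover have "0 < m" using q(1) unfolding m by simp
      moreover have "real m \<le> z / p"
      proof -
        have "real p * real m \<le> z" using q(2) unfolding m by simp
        then show ?thesis using pp by (simp add: le_divide_eq mult.commute)
      qed
      ultimately have "m \<in> M" unfolding M_def by blast
      then show "q \<in> (\<lambda>m. p * m) ` M" unfolding m by (rule imageI)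
    qed
  next
    show "(\<lambda>m. p * m) ` M \<subseteq> {q\<in>Q. p dvd q}"
    proof
      fix q assume "q \<in> (\<lambda>m. p * m) ` M"
      then obtain m where m: "q = p * m" "0 < m" "real m \<le> z / p" "squarefree m" "\<not> p dvd m"
        unfolding M_def by auto
      have "coprime p m" using m(5) p by (simp add: prime_imp_coprime)
      then have "squarefree (p * m)" using m(4) squarefree_prime[OF p] by (intro squarefree_mult_coprime)
      then have "squarefree q" using m(1) by simp
      moreover have "real q \<le> z"
      proof -
        have "real m * real p \<le> z" using m(3) pp by (simp add: le_divide_eq)
        then show ?thesis unfolding m(1) by (simp add: mult.commute)
      qed
      moreover have "0 < q" using m p prime_gt_0_nat by auto
      ultimately show "q \<in> {q\<in>Q. p dvd q}" unfolding Q_def using m by auto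
    qed
  qed
  have inj: "inj_on (\<lambda>m. p * m) M" using prime_gt_0_nat[OF p] by (intro inj_onI) simp
  have "(\<Sum>q\<in>{q\<in>Q. p dvd q}. G h q) = (\<Sum>m\<in>M. G h (p * m))"
    unfolding img by (rule sum.reindex[OF inj, unfolded comp_def])
  also have "\<dots> = (\<Sum>m\<in>M. real (h p) / (real p - real (h p)) * G h m)"
    by (rule sum.cong[OF refl], rule G_mult[OF p]) (auto simp: M_def)
  also have "\<dots> = real (h p) / (real p - real (h p)) * Aux h p (z / p)"
    unfolding Aux_def M_def by (simp add: sum_distrib_left)
  finally show ?thesis using L1 split first unfolding Aux_def by simp
qed

lemma alg1: "(E::real) \<noteq> 0 \<Longrightarrow> D \<noteq> 0 \<Longrightarrow> E / D * (A + b / E * A') = (E * A + b * A') / D"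
  by (simp add: field_simps)

lemma alg2: "(D::real) \<noteq> 0 \<Longrightarrow> (D * A + b * A') / D = A + b / D * A'"
  by (simp add: field_simps)

lemma one_step:
  assumes p: "prime p" and z: "z > 0"
    and agree: "\<forall>q. prime q \<and> q \<noteq> p \<longrightarrow> h q = h' q"
    and le: "h p \<le> h' p"
    and hlt: "\<forall>q. prime q \<longrightarrow> h q < q" and hlt': "\<forall>q. prime q \<longrightarrow> h' q < q"
  shows "(real p - real (h' p)) / (real p - real (h p)) * L z h' \<le> L z h"
proof -
  define A where "A = Aux h p z"
  define A' where "A' = Aux h p (z / p)"
  have pp: "real p \<ge> 1" using p prime_gt_0_nat by (simp add: Suc_le_eq)
  have AA: "A' \<le> A" unfolding A_def A'_def
    by (rule Aux_mono[OF hlt]) (use z pp in \<open>simp add: divide_le_eq\<close>)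
  have A'0: "A' \<ge> 0" unfolding A'_def Aux_def by (rule sum_nonneg) (use G_nonneg hlt in auto)
  have Lh: "L z h = A + real (h p) / (real p - real (h p)) * A'"
    unfolding A_def A'_def by (rule L_split[OF p])
  have Lh': "L z h' = A + real (h' p) / (real p - real (h' p)) * A'"
    unfolding A_def A'_def using L_split[OF p, of z h'] Aux_cong[OF agree] by simp
  have a: "real (h p) < real p" "real (h' p) < real p" using hlt hlt' p by auto
  have d: "real (h p) \<le> real (h' p)" using le by simp
  have "(real p - real (h' p)) / (real p - real (h p)) * L z h'
      = ((real p - real (h' p)) * A + real (h' p) * A') / (real p - real (h p))"
    unfolding Lh' using a by (intro alg1) auto
  also have "\<dots> \<le> ((real p - real (h p)) * A + real (h p) * A') / (real p - real (h p))"
  proof (rule divide_right_mono)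
    have "(real (h' p) - real (h p)) * A' \<le> (real (h' p) - real (h p)) * A"
      using AA d by (intro mult_left_mono) auto
    then show "(real p - real (h' p)) * A + real (h' p) * A' \<le> (real p - real (h p)) * A + real (h p) * A'"
      by (simp add: algebra_simps)
  qed (use a in auto)
  also have "\<dots> = L z h" unfolding Lh using a by (intro alg2) auto
  finally show ?thesis .
qed

lemma L_nonneg:
  assumes "\<forall>q. prime q \<longrightarrow> h q < q"
  shows "L z h \<ge> 0"
proof -
  have "L z h = (\<Sum>q\<in>{q. 0 < q \<and> real q \<le> z \<and> squarefree q}. G h q)"
    unfolding L_def G_def by simp
  also have "\<dots> \<ge> 0" by (rule sum_nonneg) (use G_nonneg assms in auto)
  finally show ?thesis .
qed

lemma L_cong:
  assumes "\<forall>q. prime q \<longrightarrow> h q = h' q"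
  shows "L z h = L z h'"
  unfolding L_def
proof (intro sum.cong refl prod.cong)
  fix q x :: nat assume "x \<in> prime_factors q"
  then have "prime x" by (auto intro: in_prime_factors_imp_prime)
  with assms show "real (h x) / (real x - real (h x)) = real (h' x) / (real x - real (h' x))" by simp
qed

theorem corollary1:
  fixes \<kappa> :: nat and P0 :: "nat set" and \<omega> :: "nat \<Rightarrow> nat" and z :: real
  assumes "\<kappa> \<ge> 3"
    and "finite P0" and "\<forall>p\<in>P0. prime p"
    and "\<forall>p\<in>P0. \<omega> p < \<kappa>"
    and "\<forall>p. prime p \<and> p \<notin> P0 \<longrightarrow> \<omega> p = \<kappa>"
    and "\<forall>p. prime p \<longrightarrow> \<omega> p < p"
    and "z > 0"
  shows "L z \<omega> \<ge>
           (\<Prod>p \<in> {p \<in> P0. p > \<kappa>}. (real p - real \<kappa>) / (real p - real (\<omega> p)))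
           * L z (\<lambda>p. if p > \<kappa> then \<kappa> else \<omega> p)"
proof -
  define S where "S = {p \<in> P0. p > \<kappa>}"
  define H where "H = (\<lambda>T p. if p \<in> T then \<kappa> else \<omega> p)"
  have fS: "finite S" using assms(2) unfolding S_def by auto
  have Hlt: "\<forall>q. prime q \<longrightarrow> H T q < q" if "T \<subseteq> S" for T
    using that assms(6) unfolding H_def S_def by auto
  have main: "(\<Prod>p\<in>T. (real p - real \<kappa>) / (real p - real (\<omega> p))) * L z (H T) \<le> L z \<omega>"
    if fT: "finite T" and TS0: "T \<subseteq> S" for T
    using fT TS0
  proof (induction T rule: finite_subset_induct')
    case empty
    have "H {} = \<omega>" unfolding H_def by auto
    then show ?case by simp
  next
    case (insert p T)
    have p: "prime p" "p > \<kappa>" "\<omega> p < \<kappa>" using insert assms(3,4) unfolding S_def by auto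
    have TS: "T \<subseteq> S" "insert p T \<subseteq> S" using insert by auto
    have c0: "(real p - real \<kappa>) / (real p - real (\<omega> p)) \<ge> 0" using p by simp
    have P0: "(\<Prod>p\<in>T. (real p - real \<kappa>) / (real p - real (\<omega> p))) \<ge> 0"
    proof (rule prod_nonneg)
      fix a assume "a \<in> T"
      then have a: "a \<in> P0" "\<kappa> < a" using TS(1) by (auto simp: S_def)
      then have "\<omega> a < \<kappa>" using assms(4) by auto
      then show "(real a - real \<kappa>) / (real a - real (\<omega> a)) \<ge> 0"
        using a(2) by (intro divide_nonneg_nonneg) auto
    qed
    have step: "(real p - real (H (insert p T) p)) / (real p - real (H T p)) * L z (H (insert p T)) \<le> L z (H T)"
    proof (rule one_step[OF p(1) assms(7)])
      show "\<forall>q. prime q \<and> q \<noteq> p \<longrightarrow> H T q = H (insert p T) q" unfolding H_def by auto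
      show "H T p \<le> H (insert p T) p" unfolding H_def using insert p by auto
    qed (use Hlt TS in auto)
    have hp: "H (insert p T) p = \<kappa>" "H T p = \<omega> p" unfolding H_def using insert by auto
    have "(\<Prod>p\<in>insert p T. (real p - real \<kappa>) / (real p - real (\<omega> p))) * L z (H (insert p T))
        = (\<Prod>p\<in>T. (real p - real \<kappa>) / (real p - real (\<omega> p))) *
          ((real p - real \<kappa>) / (real p - real (\<omega> p)) * L z (H (insert p T)))"
      using insert by (simp add: mult_ac)
    also have "\<dots> \<le> (\<Prod>p\<in>T. (real p - real \<kappa>) / (real p - real (\<omega> p))) * L z (H T)"
      using step hp P0 by (intro mult_left_mono) auto
    also have "\<dots> \<le> L z \<omega>" using insert by auto
    finally show ?case .
  qed
  have "L z (H S) = L z (\<lambda>p. if p > \<kappa> then \<kappa> else \<omega> p)"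
    by (rule L_cong) (use assms(5) in \<open>auto simp: H_def S_def\<close>)
  with main[OF fS subset_refl] show ?thesis unfolding S_def by simp
qed

end
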